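(* Let $N$ be a positive integer, $L>0$, and $\zeta=(\zeta_0,\dots,\zeta_{N+2})\in\mathbb{R}^{N+3}$ with $\zeta_0>\zeta_1>\dots>\zeta_{N+1}>\zeta_{N+2}=0$. Let $W^\zeta$ and $w^\zeta$ be as defined in the context. Let $\bar y=(\bar y_0,\dots,\bar y_N)\in\mathbb{R}^{N+1}$. If $\bar y_k\geq 0$ for some $k\in\{0,\dots,N\}$, then the minimization problem defining $W^\zeta(\bar y)$ has an optimal solution $(\nu^*,\alpha^* )$ in which $\alpha^*$ has the form \[ \alpha^*=(\underbrace{0,\dots,0}_{m},\alpha^*_m,1-\alpha^*_m,\underbrace{0,\dots,0}_{N-m}) \] for some $m\in\{0,\dots,N\}$, and in addition $\alpha^*_{k+1}=\dots=\alpha^*_{N+1}=0$.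
   Context: Let $e_0,\dots,e_N$ denote the standard unit vectors of $\mathbb{R}^{N+1}$ (zero-based indexing). Define for $i=0,\dots,N+1$: $x_i=-\sum_{j=0}^{i-1}\frac{\zeta_j-\zeta_{i+1}}{\sqrt{\zeta_j-\zeta_{j+1}}}e_j\in\mathbb{R}^{N+1}$; $g_i=L\sqrt{\zeta_i-\zeta_{i+1}}\,e_i$ for $i=0,\dots,N$ and $g_{N+1}=0$; $f_i=\frac L2(\zeta_i+\zeta_{i+1})$ for $i=0,\dots,N$ and $f_{N+1}=0$. For $y\in\mathbb{R}^{N+1}$, $\nu\in\mathbb{R}^{N+1}$, $\alpha=(\alpha_0,\dots,\alpha_{N+1})\in\mathbb{R}^{N+2}$ let $w^\zeta(y,\nu,\alpha)=\frac L2\|y+\nu-\sum_{i=0}^{N+1}\alpha_i(x_i-\frac1Lg_i)\|^2+\sum_{i=0}^{N+1}\alpha_i(f_i-\frac1{2L}\|g_i\|^2)$, and $W^\zeta(y)=\min\{w^\zeta(y,\nu,\alpha):\nu\in\mathbb{R}^{N+1}_+,\ \alpha\in\Delta_{N+2}\}$, where $\mathbb{R}^{N+1}_+$ is the nonnegative orthant and $\Delta_{N+2}=\{\alpha\in\mathbb{R}^{N+2}:\alpha_i\geq0,\ \sum_i\alpha_i=1\}$. An optimal solution of $W^\zeta(y)$ is a minimizing pair $(\nu,\alpha)$. *)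

theory Defs
  imports Complex_Main
begin

text \<open>Vectors in R^(N+1) are represented as functions nat => real, only the
  indices 0..N being relevant; vectors in R^(N+2) (alpha) use indices 0..N+1.\<close>

definition xpt :: "(nat \<Rightarrow> real) \<Rightarrow> nat \<Rightarrow> nat \<Rightarrow> real" where
  "xpt \<zeta> i j = (if j < i then - ((\<zeta> j - \<zeta> (i+1)) / sqrt (\<zeta> j - \<zeta> (j+1))) else 0)"

definition gpt :: "nat \<Rightarrow> real \<Rightarrow> (nat \<Rightarrow> real) \<Rightarrow> nat \<Rightarrow> nat \<Rightarrow> real" where
  "gpt N L \<zeta> i j = (if i \<le> N \<and> j = i then L * sqrt (\<zeta> i - \<zeta> (i+1)) else 0)"

definition fval :: "nat \<Rightarrow> real \<Rightarrow> (nat \<Rightarrow> real) \<Rightarrow> nat \<Rightarrow> real" where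
  "fval N L \<zeta> i = (if i \<le> N then L / 2 * (\<zeta> i + \<zeta> (i+1)) else 0)"

definition wfun :: "nat \<Rightarrow> real \<Rightarrow> (nat \<Rightarrow> real) \<Rightarrow> (nat \<Rightarrow> real) \<Rightarrow> (nat \<Rightarrow> real)
    \<Rightarrow> (nat \<Rightarrow> real) \<Rightarrow> real" where
  "wfun N L \<zeta> y \<nu> \<alpha> =
     L / 2 * (\<Sum>j\<le>N. (y j + \<nu> j - (\<Sum>i\<le>N+1. \<alpha> i * (xpt \<zeta> i j - gpt N L \<zeta> i j / L)))^2)
     + (\<Sum>i\<le>N+1. \<alpha> i * (fval N L \<zeta> i - 1 / (2 * L) * (\<Sum>j\<le>N. (gpt N L \<zeta> i j)^2)))"

definition feasible :: "nat \<Rightarrow> (nat \<Rightarrow> real) \<Rightarrow> (nat \<Rightarrow> real) \<Rightarrow> bool" where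
  "feasible N \<nu> \<alpha> \<longleftrightarrow> (\<forall>j\<le>N. \<nu> j \<ge> 0) \<and> (\<forall>i\<le>N+1. \<alpha> i \<ge> 0) \<and> (\<Sum>i\<le>N+1. \<alpha> i) = 1"

definition optimal_W :: "nat \<Rightarrow> real \<Rightarrow> (nat \<Rightarrow> real) \<Rightarrow> (nat \<Rightarrow> real) \<Rightarrow> (nat \<Rightarrow> real)
    \<Rightarrow> (nat \<Rightarrow> real) \<Rightarrow> bool" where
  "optimal_W N L \<zeta> y \<nu> \<alpha> \<longleftrightarrow> feasible N \<nu> \<alpha> \<and>
     (\<forall>\<nu>' \<alpha>'. feasible N \<nu>' \<alpha>' \<longrightarrow> wfun N L \<zeta> y \<nu> \<alpha> \<le> wfun N L \<zeta> y \<nu>' \<alpha>')"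

end

theory Submission
  imports Defs "HOL-Analysis.Analysis"
begin

lemma dec_lt:
  fixes \<zeta> :: "nat \<Rightarrow> real"
  assumes "\<And>i. i \<le> N + 1 \<Longrightarrow> \<zeta> i > \<zeta> (i + 1)"
  shows "a < b \<Longrightarrow> b \<le> N + 2 \<Longrightarrow> \<zeta> b < \<zeta> a"
proof (induction b)
  case 0 then show ?case by simp
next
  case (Suc b)
  have h: "\<zeta> (Suc b) < \<zeta> b" using assms[of b] Suc.prems by simp
  show ?case
  proof (cases "a = b")
    case True then show ?thesis using h by simp
  next
    case False then show ?thesis using Suc h by force
  qed
qed

lemma dec_le:
  fixes \<zeta> :: "nat \<Rightarrow> real"
  assumes "\<And>i. i \<le> N + 1 \<Longrightarrow> \<zeta> i > \<zeta> (i + 1)"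
  shows "a \<le> b \<Longrightarrow> b \<le> N + 2 \<Longrightarrow> \<zeta> b \<le> \<zeta> a"
  using dec_lt[of N \<zeta> a b, OF assms] by (cases "a = b") auto

lemma find_m:
  fixes f :: "nat \<Rightarrow> real"
  shows "\<mu> \<le> f 1 \<Longrightarrow> f (k + 1) < \<mu> \<Longrightarrow> \<exists>m<k. \<mu> \<le> f (m + 1) \<and> f (m + 2) < \<mu>"
proof (induction k)
  case 0 then show ?case by simp
next
  case (Suc k)
  show ?case
  proof (cases "f (k + 1) < \<mu>")
    case True then show ?thesis using Suc by (meson less_SucI)
  next
    case False then show ?thesis using Suc.prems by (intro exI[of _ k]) auto
  qed
qed

lemma sum_two:
  fixes c :: "nat \<Rightarrow> real"
  assumes "m \<le> N"
  shows "(\<Sum>i\<le>N+1. (if i = m then a else if i = m+1 then b else 0) * c i) = a * c m + b * c (m+1)"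
proof -
  have eq: "(\<lambda>i. (if i = m then a else if i = m+1 then b else 0) * c i) =
     (\<lambda>i. (if i = m then a * c m else 0) + (if i = m+1 then b * c (m+1) else 0))"
    by (rule ext) auto
  show ?thesis unfolding eq sum.distrib using assms by simp
qed

theorem theorem2:
  fixes N k :: nat and L :: real and \<zeta> y :: "nat \<Rightarrow> real"
  assumes "N \<ge> 1" and "L > 0"
    and "\<And>i. i \<le> N + 1 \<Longrightarrow> \<zeta> i > \<zeta> (i + 1)"
    and "\<zeta> (N + 2) = 0"
    and "k \<le> N" and "y k \<ge> 0"
  shows "\<exists>\<nu> \<alpha> m. optimal_W N L \<zeta> y \<nu> \<alpha> \<and> m \<le> N
           \<and> (\<forall>i\<le>N+1. i \<noteq> m \<and> i \<noteq> m + 1 \<longrightarrow> \<alpha> i = 0)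
           \<and> \<alpha> (m + 1) = 1 - \<alpha> m
           \<and> (\<forall>i. k + 1 \<le> i \<and> i \<le> N + 1 \<longrightarrow> \<alpha> i = 0)"
proof -
  note decl = dec_lt[of N \<zeta>, OF assms(3)]
  note decle = dec_le[of N \<zeta>, OF assms(3)]
  define s where "s j = sqrt (\<zeta> j - \<zeta> (j+1))" for j
  have spos: "s j > 0" if "j \<le> N+1" for j
    using assms(3)[OF that] unfolding s_def by simp
  have ssq: "s j ^ 2 = \<zeta> j - \<zeta> (j+1)" if "j \<le> N+1" for j
    using assms(3)[OF that] unfolding s_def by simp
  define G where "G \<mu> = L*\<mu> + L/2*(\<Sum>j\<le>N. (max (y j + max (\<zeta> j - \<mu>) 0 / s j) 0)^2)" for \<mu>
  have term1: "xpt \<zeta> i j - gpt N L \<zeta> i j / L = - (max (\<zeta> j - \<zeta> (i+1)) 0 / s j)"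
    if "j \<le> N" "i \<le> N+1" for i j
  proof -
    consider "j < i" | "j = i" | "i < j" by linarith
    then show ?thesis
    proof cases
      case 1
      have "\<zeta> (i+1) \<le> \<zeta> j" using decle[of j "i+1"] 1 that by simp
      then show ?thesis using 1 that unfolding xpt_def gpt_def s_def by auto
    next
      case 2
      have sp: "s i > 0" using spos that 2 by simp
      have "\<zeta> (i+1) \<le> \<zeta> i" using decle[of i "i+1"] that 2 by simp
      then have "max (\<zeta> j - \<zeta> (i+1)) 0 = s i ^ 2" using ssq[of i] 2 that by simp
      then show ?thesis using 2 that sp assms(2) unfolding xpt_def gpt_def
        by (simp add: s_def power2_eq_square real_div_sqrt)
    next
      case 3
      have "\<zeta> j \<le> \<zeta> (i+1)" using decle[of "i+1" j] 3 that by simp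
      then show ?thesis using 3 unfolding xpt_def gpt_def by auto
    qed
  qed
  have term2: "fval N L \<zeta> i - 1 / (2 * L) * (\<Sum>j\<le>N. (gpt N L \<zeta> i j)^2) = L * \<zeta> (i+1)"
    if "i \<le> N+1" for i
  proof (cases "i \<le> N")
    case True
    have "(\<Sum>j\<le>N. (gpt N L \<zeta> i j)^2) = (\<Sum>j\<le>N. if j = i then L^2 * s i ^ 2 else 0)"
      by (rule sum.cong) (auto simp: gpt_def s_def power_mult_distrib True)
    also have "\<dots> = L^2 * (\<zeta> i - \<zeta> (i+1))" using True ssq[of i] by simp
    finally show ?thesis using True assms(2) unfolding fval_def
      by (simp add: field_simps power2_eq_square)
  next
    case False
    then have "i = N+1" using that by simp
    then show ?thesis using assms(4) unfolding fval_def gpt_def by simp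
  qed
  define U where "U \<alpha> j = (\<Sum>i\<le>N+1. \<alpha> i * max (\<zeta> j - \<zeta> (i+1)) 0)" for \<alpha> :: "nat \<Rightarrow> real" and j
  define M where "M \<alpha> = (\<Sum>i\<le>N+1. \<alpha> i * \<zeta> (i+1))" for \<alpha> :: "nat \<Rightarrow> real"
  have wf: "wfun N L \<zeta> y \<nu> \<alpha> = L/2 * (\<Sum>j\<le>N. (y j + \<nu> j + U \<alpha> j / s j)^2) + L * M \<alpha>" for \<nu> \<alpha>
  proof -
    have a: "(\<Sum>j\<le>N. (y j + \<nu> j - (\<Sum>i\<le>N+1. \<alpha> i * (xpt \<zeta> i j - gpt N L \<zeta> i j / L)))^2)
      = (\<Sum>j\<le>N. (y j + \<nu> j + U \<alpha> j / s j)^2)"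
    proof (rule sum.cong)
      fix j assume "j \<in> {..N}"
      then have "(\<Sum>i\<le>N+1. \<alpha> i * (xpt \<zeta> i j - gpt N L \<zeta> i j / L)) = - (U \<alpha> j / s j)"
      proof -
        assume jN: "j \<in> {..N}"
        have "(\<Sum>i\<le>N+1. \<alpha> i * (xpt \<zeta> i j - gpt N L \<zeta> i j / L)) = (\<Sum>i\<le>N+1. - (\<alpha> i * max (\<zeta> j - \<zeta> (i+1)) 0 / s j))"
          by (rule sum.cong) (use jN in \<open>auto simp: term1\<close>)
        also have "\<dots> = - (U \<alpha> j / s j)" unfolding U_def sum_negf sum_divide_distrib ..
        finally show ?thesis .
      qed
      then show "(y j + \<nu> j - (\<Sum>i\<le>N+1. \<alpha> i * (xpt \<zeta> i j - gpt N L \<zeta> i j / L)))^2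
        = (y j + \<nu> j + U \<alpha> j / s j)^2" by simp
    qed simp
    have b: "(\<Sum>i\<le>N+1. \<alpha> i * (fval N L \<zeta> i - 1 / (2 * L) * (\<Sum>j\<le>N. (gpt N L \<zeta> i j)^2)))
       = (\<Sum>i\<le>N+1. L * (\<alpha> i * \<zeta> (i+1)))"
    proof (rule sum.cong)
      fix i assume "i \<in> {..N+1}"
      then have "fval N L \<zeta> i - 1 / (2 * L) * (\<Sum>j\<le>N. (gpt N L \<zeta> i j)^2) = L * \<zeta> (i+1)"
        by (intro term2) simp
      then show "\<alpha> i * (fval N L \<zeta> i - 1 / (2 * L) * (\<Sum>j\<le>N. (gpt N L \<zeta> i j)^2)) = L * (\<alpha> i * \<zeta> (i+1))"
        by simp
    qed simp
    show ?thesis unfolding wfun_def a b M_def by (simp only: sum_distrib_left)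
  qed
  have Mrange: "0 \<le> M \<alpha> \<and> M \<alpha> \<le> \<zeta> 1" if "feasible N \<nu> \<alpha>" for \<nu> \<alpha>
  proof -
    have ap: "\<forall>i\<le>N+1. \<alpha> i \<ge> 0" and as: "(\<Sum>i\<le>N+1. \<alpha> i) = 1"
      using that unfolding feasible_def by auto
    have "0 \<le> M \<alpha>" unfolding M_def
    proof (rule sum_nonneg)
      fix i assume "i \<in> {..N+1}"
      then have "\<zeta> (N+2) \<le> \<zeta> (i+1)" using decle[of "i+1" "N+2"] by simp
      then show "0 \<le> \<alpha> i * \<zeta> (i+1)" using ap \<open>i \<in> {..N+1}\<close> assms(4) by simp
    qed
    moreover have "M \<alpha> \<le> (\<Sum>i\<le>N+1. \<alpha> i * \<zeta> 1)" unfolding M_def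
    proof (rule sum_mono)
      fix i assume "i \<in> {..N+1}"
      then have "\<zeta> (i+1) \<le> \<zeta> 1" using decle[of 1 "i+1"] by simp
      then show "\<alpha> i * \<zeta> (i+1) \<le> \<alpha> i * \<zeta> 1" using ap \<open>i \<in> {..N+1}\<close>
        by (simp add: mult_left_mono)
    qed
    moreover have "(\<Sum>i\<le>N+1. \<alpha> i * \<zeta> 1) = \<zeta> 1" using as by (simp add: sum_distrib_right[symmetric])
    ultimately show ?thesis by simp
  qed
  have lower: "G (M \<alpha>) \<le> wfun N L \<zeta> y \<nu> \<alpha>" if "feasible N \<nu> \<alpha>" for \<nu> \<alpha>
  proof -
    have ap: "\<forall>i\<le>N+1. \<alpha> i \<ge> 0" and as: "(\<Sum>i\<le>N+1. \<alpha> i) = 1" and np: "\<forall>j\<le>N. \<nu> j \<ge> 0"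
      using that unfolding feasible_def by auto
    have "(\<Sum>j\<le>N. (max (y j + max (\<zeta> j - M \<alpha>) 0 / s j) 0)^2) \<le> (\<Sum>j\<le>N. (y j + \<nu> j + U \<alpha> j / s j)^2)"
    proof (rule sum_mono)
      fix j assume j: "j \<in> {..N}"
      have U0: "0 \<le> U \<alpha> j" unfolding U_def using ap by (intro sum_nonneg) auto
      have "(\<Sum>i\<le>N+1. \<alpha> i * (\<zeta> j - \<zeta> (i+1))) \<le> U \<alpha> j" unfolding U_def
        using ap by (intro sum_mono mult_left_mono) auto
      moreover have "(\<Sum>i\<le>N+1. \<alpha> i * (\<zeta> j - \<zeta> (i+1))) = \<zeta> j - M \<alpha>"
        unfolding M_def using as by (simp add: right_diff_distrib sum_subtractf sum_distrib_right[symmetric])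
      ultimately have "max (\<zeta> j - M \<alpha>) 0 \<le> U \<alpha> j" using U0 by simp
      then have "max (\<zeta> j - M \<alpha>) 0 / s j \<le> U \<alpha> j / s j" using spos[of j] j
        by (simp add: divide_right_mono)
      then have "y j + max (\<zeta> j - M \<alpha>) 0 / s j \<le> y j + \<nu> j + U \<alpha> j / s j" using np j by force
      then show "(max (y j + max (\<zeta> j - M \<alpha>) 0 / s j) 0)^2 \<le> (y j + \<nu> j + U \<alpha> j / s j)^2"
        by (cases "y j + max (\<zeta> j - M \<alpha>) 0 / s j \<le> 0") (auto intro: power_mono)
    qed
    then show ?thesis unfolding wf G_def using assms(2) by simp
  qed
  have Gk: "G (\<zeta> (k+1)) \<le> G \<mu>" if "0 \<le> \<mu>" "\<mu> \<le> \<zeta> (k+1)" for \<mu>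
  proof -
    define T where "T \<mu>' j = (max (y j + max (\<zeta> j - \<mu>') 0 / s j) 0)^2" for \<mu>' j
    have Tmono: "T (\<zeta> (k+1)) j \<le> T \<mu> j" if "j \<le> N" for j
    proof -
      have "max (\<zeta> j - \<zeta> (k+1)) 0 \<le> max (\<zeta> j - \<mu>) 0" using \<open>\<mu> \<le> \<zeta> (k+1)\<close> by simp
      then have "max (\<zeta> j - \<zeta> (k+1)) 0 / s j \<le> max (\<zeta> j - \<mu>) 0 / s j"
        using spos[of j] that by (simp add: divide_right_mono)
      then have "max (y j + max (\<zeta> j - \<zeta> (k+1)) 0 / s j) 0 \<le> max (y j + max (\<zeta> j - \<mu>) 0 / s j) 0"
        by simp
      then show ?thesis unfolding T_def by (simp add: power_mono)
    qed
    have sk: "s k > 0" and sk2: "s k ^ 2 = \<zeta> k - \<zeta> (k+1)" using spos ssq assms(5) by auto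
    have zk: "\<zeta> (k+1) \<le> \<zeta> k" using decle[of k "k+1"] assms(5) by simp
    define a where "a = y k + (\<zeta> k - \<zeta> (k+1)) / s k"
    define \<delta> where "\<delta> = \<zeta> (k+1) - \<mu>"
    have d0: "\<delta> \<ge> 0" using that unfolding \<delta>_def by simp
    have "(\<zeta> k - \<zeta> (k+1)) / s k = s k" using sk sk2 by (simp add: field_simps power2_eq_square)
    then have ask: "a \<ge> s k" unfolding a_def using assms(6) by simp
    have Tk1: "T (\<zeta> (k+1)) k = a^2" unfolding T_def a_def using zk sk assms(6) by simp
    have Tk2: "T \<mu> k = (a + \<delta> / s k)^2"
    proof -
      have e1: "max (\<zeta> k - \<mu>) 0 = \<zeta> k - \<mu>" using zk that by simp
      have nn: "0 \<le> (\<zeta> k - \<mu>) / s k" using zk that sk by (simp add: divide_nonneg_pos)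
      have e2: "(\<zeta> k - \<mu>) / s k = (\<zeta> k - \<zeta> (k+1)) / s k + \<delta> / s k"
        unfolding \<delta>_def by (simp add: add_divide_distrib[symmetric])
      show ?thesis unfolding T_def e1 using nn assms(6) by (simp add: e2 a_def add.assoc)
    qed
    have "(a + \<delta>/s k)^2 - a^2 = (\<delta>/s k) * (2*a + \<delta>/s k)" by (simp add: power2_eq_square algebra_simps)
    also have "\<dots> \<ge> (\<delta>/s k) * (2 * s k)" using ask d0 sk
    proof (intro mult_left_mono)
      have "0 \<le> \<delta> / s k" using d0 sk by (simp add: divide_nonneg_pos)
      then show "2 * s k \<le> 2 * a + \<delta> / s k" using ask by linarith
    qed (use d0 sk in \<open>simp add: divide_nonneg_pos\<close>)
    finally have "(a + \<delta>/s k)^2 - a^2 \<ge> 2 * \<delta>" using sk by simp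
    then have kk: "T \<mu> k - T (\<zeta> (k+1)) k \<ge> 2 * \<delta>" using Tk1 Tk2 by simp
    have "(\<Sum>j\<le>N. T \<mu> j) - (\<Sum>j\<le>N. T (\<zeta> (k+1)) j) = (\<Sum>j\<le>N. T \<mu> j - T (\<zeta> (k+1)) j)"
      by (simp add: sum_subtractf)
    also have "\<dots> = (T \<mu> k - T (\<zeta> (k+1)) k) + (\<Sum>j\<in>{..N}-{k}. T \<mu> j - T (\<zeta> (k+1)) j)"
      using assms(5) by (subst sum.remove[of _ k]) auto
    also have "\<dots> \<ge> 2 * \<delta>" using kk Tmono by (smt (verit) DiffD1 atMost_iff sum_nonneg)
    finally have "(\<Sum>j\<le>N. T \<mu> j) - (\<Sum>j\<le>N. T (\<zeta> (k+1)) j) \<ge> 2*\<delta>" .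
    then have "L/2 * ((\<Sum>j\<le>N. T \<mu> j) - (\<Sum>j\<le>N. T (\<zeta> (k+1)) j)) \<ge> L/2 * (2*\<delta>)"
      using assms(2) by (intro mult_left_mono) auto
    then show ?thesis unfolding G_def T_def[symmetric] \<delta>_def by (simp add: algebra_simps)
  qed
  have nonempty: "\<zeta> (k+1) \<le> \<zeta> 1" using decle[of 1 "k+1"] assms(5) by simp
  have contG: "continuous_on {\<zeta> (k+1)..\<zeta> 1} G" unfolding G_def
  proof (intro continuous_intros ballI)
    fix j x assume "j \<in> {..N}"
    then show "s j \<noteq> 0" using spos[of j] by simp
  qed
  obtain \<mu>s where mus: "\<mu>s \<in> {\<zeta> (k+1)..\<zeta> 1}" and musmin: "\<forall>\<mu>\<in>{\<zeta> (k+1)..\<zeta> 1}. G \<mu>s \<le> G \<mu>"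
    using continuous_attains_inf[OF compact_Icc _ contG] nonempty by auto
  have best: "G \<mu>s \<le> wfun N L \<zeta> y \<nu> \<alpha>" if "feasible N \<nu> \<alpha>" for \<nu> \<alpha>
  proof (cases "M \<alpha> \<ge> \<zeta> (k+1)")
    case True
    then show ?thesis using musmin Mrange[OF that] lower[OF that] by force
  next
    case False
    then have "G (\<zeta> (k+1)) \<le> G (M \<alpha>)" using Gk Mrange[OF that] by simp
    moreover have "G \<mu>s \<le> G (\<zeta> (k+1))" using musmin nonempty by simp
    ultimately show ?thesis using lower[OF that] by simp
  qed
  obtain m where m: "m \<le> k" "\<mu>s \<le> \<zeta> (m+1)" "\<zeta> (m+2) \<le> \<mu>s" "m = k \<longrightarrow> \<mu>s = \<zeta> (k+1)"
  proof (cases "\<mu>s = \<zeta> (k+1)")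
    case True
    have "\<zeta> (k+2) \<le> \<zeta> (k+1)" using decle[of "k+1" "k+2"] assms(5) by simp
    then show ?thesis using that[of k] True by simp
  next
    case False
    then have "\<zeta> (k+1) < \<mu>s" using mus by simp
    then obtain m where "m < k" "\<mu>s \<le> \<zeta> (m+1)" "\<zeta> (m+2) < \<mu>s"
      using find_m[of \<mu>s \<zeta> k] mus by auto
    then show ?thesis using that[of m] by simp
  qed
  have mN: "m \<le> N" using m assms(5) by simp
  have zm: "\<zeta> (m+2) < \<zeta> (m+1)" using decl[of "m+1" "m+2"] mN by simp
  define t where "t = (\<mu>s - \<zeta> (m+2)) / (\<zeta> (m+1) - \<zeta> (m+2))"
  have t0: "0 \<le> t" and t1: "t \<le> 1" unfolding t_def using m zm by auto
  have tk: "m = k \<Longrightarrow> t = 1" unfolding t_def using m zm by simp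
  have td: "t * (\<zeta> (m+1) - \<zeta> (m+2)) = \<mu>s - \<zeta> (m+2)" unfolding t_def using zm by simp
  have mut: "t * \<zeta> (m+1) + (1 - t) * \<zeta> (m+2) = \<mu>s"
  proof -
    have "t * \<zeta> (m+1) + (1 - t) * \<zeta> (m+2) = \<zeta> (m+2) + t * (\<zeta> (m+1) - \<zeta> (m+2))"
      by (simp add: algebra_simps)
    then show ?thesis using td by simp
  qed
  define \<alpha> where "\<alpha> i = (if i = m then t else if i = m+1 then 1 - t else 0)" for i
  define \<nu> where "\<nu> j = max (- (y j + max (\<zeta> j - \<mu>s) 0 / s j)) 0" for j
  have feas: "feasible N \<nu> \<alpha>"
    unfolding feasible_def
  proof (intro conjI)
    show "\<forall>j\<le>N. 0 \<le> \<nu> j" unfolding \<nu>_def by simp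
    show "\<forall>i\<le>N+1. 0 \<le> \<alpha> i" unfolding \<alpha>_def using t0 t1 by simp
    have "(\<Sum>i\<le>N+1. \<alpha> i) = (\<Sum>i\<le>N+1. \<alpha> i * 1)" by simp
    also have "\<dots> = t + (1 - t)" unfolding \<alpha>_def using sum_two[OF mN, of t "1-t" "\<lambda>_. 1"] by simp
    finally show "(\<Sum>i\<le>N+1. \<alpha> i) = 1" by simp
  qed
  have Ma: "M \<alpha> = \<mu>s" unfolding M_def \<alpha>_def
    using sum_two[OF mN, of t "1-t" "\<lambda>i. \<zeta> (i+1)"] mut by simp
  have Ua: "U \<alpha> j = max (\<zeta> j - \<mu>s) 0" if "j \<le> N" for j
  proof -
    have "U \<alpha> j = t * max (\<zeta> j - \<zeta> (m+1)) 0 + (1-t) * max (\<zeta> j - \<zeta> (m+2)) 0"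
      unfolding U_def \<alpha>_def using sum_two[OF mN, of t "1-t" "\<lambda>i. max (\<zeta> j - \<zeta> (i+1)) 0"]
      by simp
    also have "\<dots> = max (\<zeta> j - \<mu>s) 0"
    proof -
      consider "j \<le> m" | "j = m+1" | "m+2 \<le> j" by linarith
      then show ?thesis
      proof cases
        case 1
        have "\<zeta> (m+1) \<le> \<zeta> j" "\<zeta> (m+2) \<le> \<zeta> j" using decle[of j "m+1"] decle[of j "m+2"] 1 mN by auto
        moreover have "\<mu>s \<le> \<zeta> j" using m(2) \<open>\<zeta> (m+1) \<le> \<zeta> j\<close> by simp
        ultimately show ?thesis using mut by (simp add: algebra_simps)
      next
        case 2
        have "t * 0 + (1-t) * (\<zeta> (m+1) - \<zeta> (m+2)) = \<zeta> (m+1) - \<mu>s" using mut by (simp add: algebra_simps)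
        then show ?thesis using 2 zm m(2) by simp
      next
        case 3
        have "\<zeta> j \<le> \<zeta> (m+2)" "\<zeta> j \<le> \<zeta> (m+1)" using decle[of "m+2" j] decle[of "m+1" j] 3 that by auto
        then show ?thesis using m(3) by simp
      qed
    qed
    finally show ?thesis .
  qed
  have wval: "wfun N L \<zeta> y \<nu> \<alpha> = G \<mu>s"
  proof -
    have "(\<Sum>j\<le>N. (y j + \<nu> j + U \<alpha> j / s j)^2) = (\<Sum>j\<le>N. (max (y j + max (\<zeta> j - \<mu>s) 0 / s j) 0)^2)"
      by (rule sum.cong) (auto simp: Ua \<nu>_def max_def)
    then show ?thesis unfolding wf G_def Ma by simp
  qed
  have opt: "optimal_W N L \<zeta> y \<nu> \<alpha>" unfolding optimal_W_def using feas best wval by simp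
  show ?thesis
  proof (intro exI conjI)
    show "optimal_W N L \<zeta> y \<nu> \<alpha>" by (rule opt)
    show "m \<le> N" by (rule mN)
    show "\<forall>i\<le>N+1. i \<noteq> m \<and> i \<noteq> m + 1 \<longrightarrow> \<alpha> i = 0" unfolding \<alpha>_def by simp
    show "\<alpha> (m + 1) = 1 - \<alpha> m" unfolding \<alpha>_def by simp
    show "\<forall>i. k + 1 \<le> i \<and> i \<le> N + 1 \<longrightarrow> \<alpha> i = 0" unfolding \<alpha>_def using m(1) tk by auto
  qed
qed

end
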